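(* Let $\mathbf{a}=\{a_i\}_{i\ge1}$ and $\mathbf{b}=\{b_i\}_{i\ge1}$ be elements of $\mathbf{C}$ and let $K,L\in(0,\infty)$. If the metric spaces $(\Upsilon, K\cdot R[\mathbf{a}])$ and $(\Upsilon, L\cdot R[\mathbf{b}])$ are isometric, then $\mathbf{a}=\mathbf{b}$.
   Context: $\mathbf{C}=\prod_{i=1}^\infty[2^{-2i},2^{-2i+1}]$, a set of sequences $\mathbf{a}=\{a_i\}_{i\ge1}$; for $\mathbf{a}\in\mathbf{C}$ one sets additionally $a_0=1$. $\Upsilon=\{(0,0)\}\cup\big((0,1]\times\mathbb{Z}_{\ge0}\big)$, and an element $(s,i)$ is written $s_i$ (so $0_0=(0,0)$). For $\mathbf{a}\in\mathbf{C}$, the metric $R[\mathbf{a}]$ on $\Upsilon$ is $R[\mathbf{a}](s_i,t_j)=a_i|s-t|$ if $i=j$ and $R[\mathbf{a}](s_i,t_j)=a_is+a_jt$ if $i\ne j$ (a compact metric tree with edges of lengths $a_i$ glued at $0_0$). *)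

theory Defs
  imports Complex_Main
begin

text \<open>The set C of sequences; a sequence is a function nat => real with the
  convention a 0 = 1 built in, and 2^(-2i) <= a i <= 2^(-2i+1) for i >= 1.\<close>
definition seqC :: "(nat \<Rightarrow> real) set" where
  "seqC = {a. a 0 = 1 \<and> (\<forall>i\<ge>1. (2::real) powi (- 2 * int i) \<le> a i \<and> a i \<le> (2::real) powi (- 2 * int i + 1))}"

text \<open>Upsilon: the point (0,0) together with (0,1] x Z_{>=0}; s_i is the pair (s,i).\<close>
definition Upsilon :: "(real \<times> nat) set" where
  "Upsilon = {(0, 0)} \<union> ({0<..1} \<times> UNIV)"

definition R :: "(nat \<Rightarrow> real) \<Rightarrow> real \<times> nat \<Rightarrow> real \<times> nat \<Rightarrow> real" where
  "R a p q = (if snd p = snd q then a (snd p) * \<bar>fst p - fst q\<bar>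
              else a (snd p) * fst p + a (snd q) * fst q)"

definition isometric_spaces :: "'a set \<Rightarrow> ('a \<Rightarrow> 'a \<Rightarrow> real) \<Rightarrow> 'b set \<Rightarrow> ('b \<Rightarrow> 'b \<Rightarrow> real) \<Rightarrow> bool" where
  "isometric_spaces X d Y e \<longleftrightarrow>
     (\<exists>f. bij_betw f X Y \<and> (\<forall>x\<in>X. \<forall>y\<in>X. e (f x) (f y) = d x y))"

end

theory Submission
  imports Defs
begin

lemma seqC_bd: assumes "a \<in> seqC" shows "1 \<le> a i * 4^i \<and> a i * 4^i \<le> 2"
proof (cases "i = 0")
  case True then show ?thesis using assms by (simp add: seqC_def)
next
  case False
  have n: "nat (2 * int i) = 2*i" by simp
  have e1: "(2::real) powi (- 2 * int i) = 1 / 4^i"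
    by (simp add: power_int_def n power_mult power_one_over)
  have e2: "(2::real) powi (- 2 * int i + 1) = 2 / 4^i"
  proof -
    have "(2::real) powi (- 2 * int i + 1) = 2 powi (- 2 * int i) * 2 powi 1"
      by (rule power_int_add) auto
    then show ?thesis using e1 by simp
  qed
  have A: "\<forall>i\<ge>1. (2::real) powi (- 2 * int i) \<le> a i \<and> a i \<le> (2::real) powi (- 2 * int i + 1)"
    using assms unfolding seqC_def by blast
  have "i \<ge> 1" using False by simp
  with A have "(2::real) powi (- 2 * int i) \<le> a i \<and> a i \<le> (2::real) powi (- 2 * int i + 1)" by blast
  then have "1/4^i \<le> a i \<and> a i \<le> 2/4^i" unfolding e1 e2 .
  moreover have "(0::real) < 4^i" by simp
  ultimately show ?thesis by (simp add: field_simps)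
qed

lemma sides:
  fixes a :: "nat \<Rightarrow> real"
  assumes pos: "\<And>k. a k > 0" and s: "0 < s"
    and t: "0 \<le> t" and u: "0 \<le> u" and ny: "(t,j) \<noteq> (s,i)" and nz: "(u,k) \<noteq> (s,i)"
    and B: "R a (t,j) (u,k) = R a (t,j) (s,i) + R a (s,i) (u,k)"
  shows "(j = i \<and> t > s) \<noteq> (k = i \<and> u > s)"
proof
  assume E: "(j = i \<and> t > s) = (k = i \<and> u > s)"
  have ai: "a i > 0" using pos by simp
  show False
  proof (cases "j = i \<and> t > s")
    case True
    then have "k = i" "u > s" using E by auto
    with True B have "a i * \<bar>t - u\<bar> = a i * (t - s) + a i * (u - s)" by (simp add: R_def)
    then have "a i * \<bar>t - u\<bar> = a i * ((t - s) + (u - s))" by (simp only: distrib_left)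
    then have "\<bar>t - u\<bar> = (t - s) + (u - s)" using ai by simp
    then show False using True \<open>u > s\<close> by (auto simp: abs_if split: if_splits)
  next
    case False
    then have F2: "\<not> (k = i \<and> u > s)" using E by auto
    show False
    proof (cases "j = i")
      case ji: True
      then have ts: "t < s" using False ny by auto
      show False
      proof (cases "k = i")
        case True
        then have "u < s" using F2 nz by auto
        with True ji ts B have "a i * \<bar>t - u\<bar> = a i * (s - t) + a i * (s - u)" by (simp add: R_def)
        then have "a i * \<bar>t - u\<bar> = a i * ((s - t) + (s - u))" by (simp only: distrib_left)
        then have "\<bar>t - u\<bar> = (s - t) + (s - u)" using ai by simp
        then show False using ts \<open>u < s\<close> by (auto simp: abs_if split: if_splits)
      next
        case False
        with ji ts B have "a i * t + a k * u = a i * (s - t) + (a i * s + a k * u)" by (simp add: R_def)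
        then have "a i * t = a i * ((s - t) + s)" by (simp only: distrib_left)
        then have "t = (s - t) + s" using ai by simp
        then show False using ts t s by simp
      qed
    next
      case ji: False
      have "a i * s > 0" using ai s by simp
      show False
      proof (cases "k = i")
        case True
        then have "u < s" using F2 nz by auto
        with True ji B have "a j * t + a i * u = (a j * t + a i * s) + a i * (s - u)" by (simp add: R_def)
        then have "a i * u = a i * (s - u) + a i * s" by simp
        then have "a i * u = a i * ((s - u) + s)" by (simp only: distrib_left)
        then have "u = (s - u) + s" using ai by simp
        then show False using \<open>u < s\<close> by simp
      next
        case ki: False
        show False
        proof (cases "j = k")
          case True
          with ji ki B have "a j * \<bar>t - u\<bar> = (a j * t + a i * s) + (a i * s + a j * u)" by (simp add: R_def)
          moreover have "a j * \<bar>t - u\<bar> \<le> a j * t + a j * u"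
          proof -
            have "\<bar>t - u\<bar> \<le> t + u" using t u by simp
            then show ?thesis using pos[of j] by (simp add: mult_left_mono flip: distrib_left)
          qed
          ultimately show False using \<open>a i * s > 0\<close> by (simp add: mult.commute)
        next
          case False
          with ji ki B have "a j * t + a k * u = (a j * t + a i * s) + (a i * s + a k * u)" by (simp add: R_def)
          then show False using \<open>a i * s > 0\<close> by auto
        qed
      qed
    qed
  qed
qed
lemma seqC_pos: "a \<in> seqC \<Longrightarrow> a k > 0"
proof -
  assume "a \<in> seqC"
  then have "0 < a k * 4^k" using seqC_bd[of a k] by linarith
  then show "a k > 0" by (simp add: zero_less_mult_iff)
qed

lemma seqC_le1: assumes "a \<in> seqC" shows "a k \<le> 1"
proof (cases "k = 0")
  case True then show ?thesis using assms by (simp add: seqC_def)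
next
  case False
  have "(4::real)^1 \<le> 4^k" using False by (intro power_increasing) auto
  moreover have "a k * 4^k \<le> 2" "a k > 0" using seqC_bd[OF assms] seqC_pos[OF assms] by auto
  ultimately have "a k * 4 \<le> a k * 4^k" by (intro mult_left_mono) auto
  then have "a k * 4 \<le> 2" using \<open>a k * 4^k \<le> 2\<close> by linarith
  then show ?thesis by simp
qed

lemma seqC_neq: assumes "a \<in> seqC" "b \<in> seqC" "i < j" shows "a i \<noteq> b j"
proof
  assume E: "a i = b j"
  have "(4::real)^j = 4^i * 4^(j-i)" using assms(3) by (metis le_add_diff_inverse less_imp_le power_add)
  moreover have "(4::real)^1 \<le> 4^(j-i)" using assms(3) by (intro power_increasing) auto
  ultimately have "4^i * 4 \<le> (4::real)^j" by simp
  moreover have "a i > 0" using seqC_pos[OF assms(1)] .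
  ultimately have "a i * (4^i * 4) \<le> a i * 4^j" by (intro mult_left_mono) auto
  moreover have "1 \<le> a i * 4^i" "b j * 4^j \<le> 2" using seqC_bd[OF assms(1)] seqC_bd[OF assms(2)] by auto
  ultimately have "4 \<le> b j * 4^j" using E by (simp add: mult.assoc)
  then show False using \<open>b j * 4^j \<le> 2\<close> by simp
qed

lemma Ups_iff: "p \<in> Upsilon \<longleftrightarrow> p = (0,0) \<or> (0 < fst p \<and> fst p \<le> 1)"
  by (cases p) (auto simp: Upsilon_def)

lemma Rc: "0 \<le> t \<Longrightarrow> R a (0,0) (t,j) = a j * t"
  by (auto simp: R_def)

lemma nobranch:
  fixes a :: "nat \<Rightarrow> real"
  assumes pos: "\<And>k. a k > 0" and x: "x \<in> Upsilon" "x \<noteq> (0,0)"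
    and y: "y1 \<in> Upsilon" "y2 \<in> Upsilon" "y3 \<in> Upsilon" "y1 \<noteq> x" "y2 \<noteq> x" "y3 \<noteq> x"
    and B: "R a y1 y2 = R a y1 x + R a x y2" "R a y1 y3 = R a y1 x + R a x y3"
      "R a y2 y3 = R a y2 x + R a x y3"
  shows False
proof -
  obtain s i where xs: "x = (s,i)" by (cases x)
  have s: "0 < s" using x xs by (auto simp: Ups_iff)
  have nn: "0 \<le> fst y" if "y \<in> Upsilon" for y using that by (auto simp: Ups_iff)
  have D: "(snd y = i \<and> fst y > s) \<noteq> (snd z = i \<and> fst z > s)"
    if "y \<in> Upsilon" "z \<in> Upsilon" "y \<noteq> x" "z \<noteq> x" "R a y z = R a y x + R a x z" for y z
    using sides[OF pos s nn[OF that(1)] nn[OF that(2)], of "snd y" i "snd z"] that xs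
    by (cases y; cases z) auto
  show False using D[OF y(1,2,4,5) B(1)] D[OF y(1,3,4,6) B(2)] D[OF y(2,3,5,6) B(3)] by blast
qed

lemma endpoint_a:
  fixes a :: "nat \<Rightarrow> real"
  assumes pos: "\<And>k. a k > 0" and y: "y \<in> Upsilon"
    and E: "R a (0,0) y = R a (0,0) (1,i) + R a (1,i) y"
  shows "y = (1,i)"
proof -
  obtain t k where yt: "y = (t,k)" by (cases y)
  have t: "0 \<le> t" "t \<le> 1" using y yt by (auto simp: Ups_iff)
  have E': "a k * t = a i + R a (1,i) (t,k)" using E yt Rc[OF t(1)] Rc[of 1] by simp
  show ?thesis
  proof (cases "k = i")
    case True
    with E' have "a i * t = a i * (1 + \<bar>1 - t\<bar>)" by (simp add: R_def distrib_left)
    then have "t = 1 + \<bar>1 - t\<bar>" using pos[of i] by simp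
    then show ?thesis using t yt True by simp
  next
    case False
    with E' have "a k * t = a i + (a i + a k * t)" by (simp add: R_def)
    then show ?thesis using pos[of i] by simp
  qed
qed

lemma endpoint_b:
  fixes b :: "nat \<Rightarrow> real"
  assumes x: "x \<in> Upsilon"
    and E: "\<forall>y\<in>Upsilon. R b (0,0) y = R b (0,0) x + R b x y \<longrightarrow> y = x"
  shows "fst x = 1"
proof (rule ccontr)
  assume ne: "fst x \<noteq> 1"
  obtain t j where xt: "x = (t,j)" by (cases x)
  have t: "0 \<le> t" "t \<le> 1" using x xt by (auto simp: Ups_iff)
  have "(1,j) \<in> Upsilon" by (simp add: Ups_iff)
  moreover have "R b (0,0) (1,j) = R b (0,0) x + R b x (1,j)"
    using Rc[OF t(1), of b j] Rc[of 1 b j] t xt by (simp add: R_def algebra_simps)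
  ultimately have "(1,j) = x" using E by blast
  then show False using ne xt by auto
qed

lemma main:
  fixes a b :: "nat \<Rightarrow> real" and K L :: real
  assumes a: "a \<in> seqC" and b: "b \<in> seqC" and K: "K > 0" and L: "L > 0"
    and f: "bij_betw f Upsilon Upsilon"
    and iso: "\<forall>x\<in>Upsilon. \<forall>y\<in>Upsilon. L * R b (f x) (f y) = K * R a x y"
  shows "\<exists>j. K * a i = L * b j"
proof -
  let ?c = "(0::real, 0::nat)"
  have cU: "?c \<in> Upsilon" by (simp add: Ups_iff)
  have eU: "(1::real, k) \<in> Upsilon" for k by (simp add: Ups_iff)
  have inj: "inj_on f Upsilon" and fU: "f ` Upsilon = Upsilon" using f by (auto simp: bij_betw_def)
  have fin: "f x \<in> Upsilon" if "x \<in> Upsilon" for x using fU that by auto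
  have Rb: "R b (f x) (f y) = (K / L) * R a x y" if "x \<in> Upsilon" "y \<in> Upsilon" for x y
    using iso that L by (simp add: field_simps)
  have fc: "f ?c = ?c"
  proof (rule ccontr)
    assume ne: "f ?c \<noteq> ?c"
    have nf: "f (1, k) \<noteq> f ?c" for k using inj_onD[OF inj _ eU cU] by auto
    have Ba: "R a (1,k) (1,m) = R a (1,k) ?c + R a ?c (1,m)" if "k \<noteq> m" for k m
      using that by (simp add: R_def)
    have Bb: "R b (f (1,k)) (f (1,m)) = R b (f (1,k)) (f ?c) + R b (f ?c) (f (1,m))" if "k \<noteq> m" for k m
      using Ba[OF that] Rb[OF eU eU, of k m] Rb[OF eU cU, of k] Rb[OF cU eU, of m]
      by (simp add: ring_distribs add_divide_distrib)
    have b1: "R b (f (1,0)) (f (1,1)) = R b (f (1,0)) (f ?c) + R b (f ?c) (f (1,1))" by (rule Bb) simp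
    have b2: "R b (f (1,0)) (f (1,2)) = R b (f (1,0)) (f ?c) + R b (f ?c) (f (1,2))" by (rule Bb) simp
    have b3: "R b (f (1,1)) (f (1,2)) = R b (f (1,1)) (f ?c) + R b (f ?c) (f (1,2))" by (rule Bb) simp
    show False
      by (rule nobranch[OF seqC_pos[OF b] fin[OF cU] ne fin[OF eU] fin[OF eU] fin[OF eU] nf nf nf b1 b2 b3])
  qed
  let ?p = "(1::real, i)"
  have endp: "fst (f ?p) = 1"
  proof (rule endpoint_b[OF fin[OF eU]], intro ballI impI)
    fix y assume yU: "y \<in> Upsilon" and Ey: "R b ?c y = R b ?c (f ?p) + R b (f ?p) y"
    then obtain y' where y': "y' \<in> Upsilon" "y = f y'" using fU by blast
    have "(K / L) * R a ?c y' = (K / L) * R a ?c ?p + (K / L) * R a ?p y'"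
      using Ey y'(2) Rb[OF cU y'(1)] Rb[OF cU eU, of i] Rb[OF eU y'(1), of i] fc by metis
    then have "(K / L) * R a ?c y' = (K / L) * (R a ?c ?p + R a ?p y')"
      by (simp only: distrib_left)
    then have "R a ?c y' = R a ?c ?p + R a ?p y'" using K L by simp
    then have "y' = ?p" using endpoint_a[OF _ y'(1)] seqC_pos[OF a] by blast
    then show "y = f ?p" using y' by simp
  qed
  obtain j where fj: "f ?p = (1, j)" using endp by (cases "f ?p") auto
  have "L * R b (f ?c) (f ?p) = K * R a ?c ?p" using iso cU eU by blast
  then have "L * b j = K * a i" using fc fj Rc[of 1 a i] Rc[of 1 b j] by simp
  then show ?thesis by metis
qed

theorem proposition2p5:
  fixes a b :: "nat \<Rightarrow> real" and K L :: real
  assumes "a \<in> seqC" and "b \<in> seqC" and "K > 0" and "L > 0"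
    and "isometric_spaces Upsilon (\<lambda>p q. K * R a p q) Upsilon (\<lambda>p q. L * R b p q)"
  shows "a = b"
proof -
  obtain f where f: "bij_betw f Upsilon Upsilon"
    and iso0: "\<forall>x\<in>Upsilon. \<forall>y\<in>Upsilon. L * R b (f x) (f y) = K * R a x y"
    using assms(5) unfolding isometric_spaces_def by blast
  define g where "g = inv_into Upsilon f"
  have g: "bij_betw g Upsilon Upsilon" unfolding g_def by (rule bij_betw_inv_into[OF f])
  have fg: "f (g x) = x" if "x \<in> Upsilon" for x
    unfolding g_def using that f by (metis bij_betw_imp_surj_on f_inv_into_f)
  have gU: "g x \<in> Upsilon" if "x \<in> Upsilon" for x using g that by (rule bij_betw_apply)
  have isog: "\<forall>x\<in>Upsilon. \<forall>y\<in>Upsilon. K * R a (g x) (g y) = L * R b x y"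
  proof (intro ballI)
    fix x y assume "x \<in> Upsilon" "y \<in> Upsilon"
    then show "K * R a (g x) (g y) = L * R b x y"
      using iso0 gU fg by metis
  qed
  note m1 = main[OF assms(1,2,3,4) f iso0]
  note m2 = main[OF assms(2,1,4,3) g isog]
  obtain j where j: "K * a 0 = L * b j" using m1 by blast
  have a0: "a 0 = 1" "b 0 = 1" using assms(1,2) by (auto simp: seqC_def)
  have "K \<le> L" using j a0 seqC_le1[OF assms(2), of j] assms(4)
    by (metis mult.right_neutral mult_left_mono less_imp_le)
  moreover obtain j' where j': "L * b 0 = K * a j'" using m2 by blast
  then have "L \<le> K" using a0 seqC_le1[OF assms(1), of j'] assms(3)
    by (metis mult.right_neutral mult_left_mono less_imp_le)
  ultimately have KL: "K = L" by simp
  show "a = b"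
  proof
    fix i
    obtain j where "K * a i = L * b j" using m1 by blast
    then have e: "a i = b j" using KL assms(4) by simp
    have "i = j"
    proof (rule ccontr)
      assume "i \<noteq> j"
      then have "i < j \<or> j < i" by arith
      then show False using e seqC_neq[OF assms(1,2), of i j] seqC_neq[OF assms(2,1), of j i] by auto
    qed
    then show "a i = b i" using e by simp
  qed
qed

end
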